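(* Let $\mathcal A=\mathcal A_0\oplus\mathcal A_1$ be a GDN superalgebra generated by $X=X_0\cup X_1$ with $X_0\subseteq\mathcal A_0$, $X_1\subseteq\mathcal A_1$. Then for every integer $q\ge1$, $$[\mathcal A_0,\underbrace{\mathcal A_1,\dots,\mathcal A_1}_{q}]_L\subseteq\sum_{\substack{2t+m+p=q\\ t,m\ge0,\ p\in\{1,2\}}}[\mathcal A_0,\underbrace{\mathcal A_0,\dots,\mathcal A_0}_{t},\underbrace{kX_1,\dots,kX_1}_{m},\underbrace{\mathcal A_1,\dots,\mathcal A_1}_{p}]_L,$$ where $kX_1$ is the linear span of $X_1$.
   Context: A GDN superalgebra is a superalgebra $\mathcal A=\mathcal A_0\oplus\mathcal A_1$ over a field $k$ (product $\circ$, $\mathcal A_i\circ\mathcal A_j\subseteq\mathcal A_{i+j}$ mod 2, $|x|=i$ for nonzero $x\in\mathcal A_i$) satisfying for homogeneous $x,y,z$: $x\circ(y\circ z)-(x\circ y)\circ z=(-1)^{|x||y|}(y\circ(x\circ z)-(y\circ x)\circ z)$ and $(x\circ y)\circ z=(-1)^{|y||z|}(x\circ z)\circ y$. For subspaces $\mathcal V_i$, $[\mathcal V_1,\dots,\mathcal V_n]_L$ denotes the span of all $((\cdots((x_1\circ x_2)\circ x_3)\cdots)\circ x_n)$ with $x_i\in\mathcal V_i$. *)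

theory Defs
  imports Main "HOL.Vector_Spaces"
begin

definition grc :: "'a set \<Rightarrow> 'a set \<Rightarrow> nat \<Rightarrow> 'a set" where
  "grc A0 A1 i = (if even i then A0 else A1)"

definition superalgebra ::
  "('k::field \<Rightarrow> 'a::ab_group_add \<Rightarrow> 'a) \<Rightarrow> ('a \<Rightarrow> 'a \<Rightarrow> 'a) \<Rightarrow> 'a set \<Rightarrow> 'a set \<Rightarrow> bool" where
  "superalgebra scale mult A0 A1 \<longleftrightarrow>
     vector_space scale \<and>
     module.subspace scale A0 \<and> module.subspace scale A1 \<and>
     A0 \<inter> A1 = {0} \<and> (\<forall>v. \<exists>a0\<in>A0. \<exists>a1\<in>A1. v = a0 + a1) \<and>
     (\<forall>x y z. mult (x + y) z = mult x z + mult y z) \<and>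
     (\<forall>x y z. mult x (y + z) = mult x y + mult x z) \<and>
     (\<forall>c x y. mult (scale c x) y = scale c (mult x y)) \<and>
     (\<forall>c x y. mult x (scale c y) = scale c (mult x y)) \<and>
     (\<forall>i\<in>{0,1}. \<forall>j\<in>{0,1}. \<forall>x\<in>grc A0 A1 i. \<forall>y\<in>grc A0 A1 j. mult x y \<in> grc A0 A1 (i + j))"

definition sgn_deg :: "nat \<Rightarrow> nat \<Rightarrow> 'a::ab_group_add \<Rightarrow> 'a" where
  "sgn_deg i j v = (if odd (i * j) then - v else v)"

definition gdn_superalgebra ::
  "('k::field \<Rightarrow> 'a::ab_group_add \<Rightarrow> 'a) \<Rightarrow> ('a \<Rightarrow> 'a \<Rightarrow> 'a) \<Rightarrow> 'a set \<Rightarrow> 'a set \<Rightarrow> bool" where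
  "gdn_superalgebra scale mult A0 A1 \<longleftrightarrow>
     superalgebra scale mult A0 A1 \<and>
     (\<forall>i\<in>{0,1}. \<forall>j\<in>{0,1}. \<forall>l\<in>{0,1}.
        \<forall>x\<in>grc A0 A1 i. \<forall>y\<in>grc A0 A1 j. \<forall>z\<in>grc A0 A1 l.
          mult x (mult y z) - mult (mult x y) z
            = sgn_deg i j (mult y (mult x z) - mult (mult y x) z) \<and>
          mult (mult x y) z = sgn_deg j l (mult (mult x z) y))"

definition generated_subalgebra ::
  "('k::field \<Rightarrow> 'a::ab_group_add \<Rightarrow> 'a) \<Rightarrow> ('a \<Rightarrow> 'a \<Rightarrow> 'a) \<Rightarrow> 'a set \<Rightarrow> 'a set" where
  "generated_subalgebra scale mult X =
     \<Inter>{S. X \<subseteq> S \<and> module.subspace scale S \<and> (\<forall>x\<in>S. \<forall>y\<in>S. mult x y \<in> S)}"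

definition lnorm :: "('a \<Rightarrow> 'a \<Rightarrow> 'a) \<Rightarrow> 'a list \<Rightarrow> 'a" where
  "lnorm mult xs = foldl mult (hd xs) (tl xs)"

definition lbracket ::
  "('k::field \<Rightarrow> 'a::ab_group_add \<Rightarrow> 'a) \<Rightarrow> ('a \<Rightarrow> 'a \<Rightarrow> 'a) \<Rightarrow> 'a set list \<Rightarrow> 'a set" where
  "lbracket scale mult Vs =
     module.span scale {lnorm mult xs | xs. length xs = length Vs \<and> (\<forall>i<length Vs. xs ! i \<in> Vs ! i)}"

end

theory Submission
  imports Defs "HOL-Library.Multiset"
begin

locale gdn_ctx =
  fixes scale :: "'k::field \<Rightarrow> 'a::ab_group_add \<Rightarrow> 'a"
    and mult :: "'a \<Rightarrow> 'a \<Rightarrow> 'a"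
    and A0 A1 X0 X1 :: "'a set"
  assumes gdn: "gdn_superalgebra scale mult A0 A1"
    and X0: "X0 \<subseteq> A0" and X1: "X1 \<subseteq> A1"
    and gen: "generated_subalgebra scale mult (X0 \<union> X1) = UNIV"
begin

lemma vs: "vector_space scale" using gdn by (simp add: gdn_superalgebra_def superalgebra_def)

sublocale vector_space scale by (rule vs)

lemma sub0: "subspace A0" and sub1: "subspace A1" and inter: "A0 \<inter> A1 = {0}"
  using gdn by (simp_all add: gdn_superalgebra_def superalgebra_def)

lemma ladd: "mult (x + y) z = mult x z + mult y z"
  and radd: "mult x (y + z) = mult x y + mult x z"
  and lsc: "mult (scale c x) y = scale c (mult x y)"
  and rsc: "mult x (scale c y) = scale c (mult x y)"
  using gdn by (simp_all add: gdn_superalgebra_def superalgebra_def)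

lemma grading: "i \<in> {0,1} \<Longrightarrow> j \<in> {0,1} \<Longrightarrow> x \<in> grc A0 A1 i \<Longrightarrow> y \<in> grc A0 A1 j
   \<Longrightarrow> mult x y \<in> grc A0 A1 (i + j)"
  using gdn unfolding gdn_superalgebra_def superalgebra_def by blast

lemma m00: "x \<in> A0 \<Longrightarrow> y \<in> A0 \<Longrightarrow> mult x y \<in> A0"
  using grading[of 0 0 x y] by (simp add: grc_def)
lemma m01: "x \<in> A0 \<Longrightarrow> y \<in> A1 \<Longrightarrow> mult x y \<in> A1"
  using grading[of 0 1 x y] by (simp add: grc_def)
lemma m10: "x \<in> A1 \<Longrightarrow> y \<in> A0 \<Longrightarrow> mult x y \<in> A1"
  using grading[of 1 0 x y] by (simp add: grc_def)
lemma m11: "x \<in> A1 \<Longrightarrow> y \<in> A1 \<Longrightarrow> mult x y \<in> A0"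
  using grading[of 1 1 x y] by (simp add: grc_def)

lemma ids: "i \<in> {0,1} \<Longrightarrow> j \<in> {0,1} \<Longrightarrow> l \<in> {0,1} \<Longrightarrow> x \<in> grc A0 A1 i \<Longrightarrow> y \<in> grc A0 A1 j
   \<Longrightarrow> z \<in> grc A0 A1 l \<Longrightarrow>
          mult x (mult y z) - mult (mult x y) z
            = sgn_deg i j (mult y (mult x z) - mult (mult y x) z) \<and>
          mult (mult x y) z = sgn_deg j l (mult (mult x z) y)"
  using gdn unfolding gdn_superalgebra_def by blast

lemma LS011: "x \<in> A0 \<Longrightarrow> y \<in> A1 \<Longrightarrow> z \<in> A1 \<Longrightarrow>
   mult x (mult y z) - mult (mult x y) z = mult y (mult x z) - mult (mult y x) z"
proof -
  assume a: "x \<in> A0" "y \<in> A1" "z \<in> A1"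
  have g: "x \<in> grc A0 A1 0" "y \<in> grc A0 A1 1" "z \<in> grc A0 A1 1" using a by (simp_all add: grc_def)
  have d: "(0::nat) \<in> {0,1}" "(1::nat) \<in> {0,1}" by simp_all
  from conjunct1[OF ids[OF d(1) d(2) d(2) g]] show ?thesis by (simp add: sgn_deg_def)
qed

lemma RC101: "x \<in> A1 \<Longrightarrow> y \<in> A0 \<Longrightarrow> z \<in> A1 \<Longrightarrow>
   mult (mult x y) z = mult (mult x z) y"
proof -
  assume a: "x \<in> A1" "y \<in> A0" "z \<in> A1"
  have g: "x \<in> grc A0 A1 1" "y \<in> grc A0 A1 0" "z \<in> grc A0 A1 1" using a by (simp_all add: grc_def)
  have d: "(0::nat) \<in> {0,1}" "(1::nat) \<in> {0,1}" by simp_all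
  from conjunct2[OF ids[OF d(2) d(1) d(2) g]] show ?thesis by (simp add: sgn_deg_def)
qed

definition H where "H = A0 \<union> A1"

definition pm :: "'a \<Rightarrow> 'a \<Rightarrow> bool" where "pm a b \<longleftrightarrow> a = b \<or> a = - b"

lemma Hdeg: "x \<in> H \<Longrightarrow> \<exists>i\<in>{0,1::nat}. x \<in> grc A0 A1 i"
  unfolding H_def grc_def by (metis UnE even_zero insertI1 insertI2 odd_one singletonI)

lemma RC: "x \<in> H \<Longrightarrow> y \<in> H \<Longrightarrow> z \<in> H \<Longrightarrow> pm (mult (mult x y) z) (mult (mult x z) y)"
proof -
  assume "x \<in> H" "y \<in> H" "z \<in> H"
  then obtain i j l where "i \<in> {0,1::nat}" "j \<in> {0,1::nat}" "l \<in> {0,1::nat}"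
    "x \<in> grc A0 A1 i" "y \<in> grc A0 A1 j" "z \<in> grc A0 A1 l"
    using Hdeg by meson
  from ids[OF this] show ?thesis unfolding pm_def sgn_deg_def by auto
qed

lemma multH: "x \<in> H \<Longrightarrow> y \<in> H \<Longrightarrow> mult x y \<in> H"
  unfolding H_def using m00 m01 m10 m11 by blast

lemma mult0: "mult 0 z = 0"
  using ladd[of 0 0 z] by simp

lemma mult_neg: "mult (- v) z = - mult v z"
proof -
  have "mult v z + mult (- v) z = 0" using ladd[of v "- v" z] mult0 by simp
  from minus_unique[OF this] show ?thesis by simp
qed

lemma mult_diff: "mult (v - w) z = mult v z - mult w z"
  using ladd[of v "- w" z] mult_neg by simp

lemma rmult0: "mult z 0 = 0"
  using radd[of z 0 0] by simp

lemma rmult_neg: "mult z (- v) = - mult z v"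
proof -
  have "mult z v + mult z (- v) = 0" using radd[of z v "- v"] rmult0 by simp
  from minus_unique[OF this] show ?thesis by simp
qed

lemma rmult_diff: "mult z (v - w) = mult z v - mult z w"
  using radd[of z v "- w"] rmult_neg by simp

lemma foldl_add: "foldl mult (u + v) zs = foldl mult u zs + foldl mult v zs"
  by (induction zs arbitrary: u v) (simp_all add: ladd)

lemma foldl_scale: "foldl mult (scale c u) zs = scale c (foldl mult u zs)"
  by (induction zs arbitrary: u) (simp_all add: lsc)

lemma foldl_neg: "foldl mult (- u) zs = - foldl mult u zs"
  by (induction zs arbitrary: u) (simp_all add: mult_neg)

lemma foldl_zero: "foldl mult 0 zs = 0"
  by (induction zs) (simp_all add: mult0)

lemma foldlH: "x \<in> H \<Longrightarrow> set zs \<subseteq> H \<Longrightarrow> foldl mult x zs \<in> H"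
  by (induction zs arbitrary: x) (simp_all add: multH)

lemma pm_sym: "pm a b \<Longrightarrow> pm b a" unfolding pm_def by auto
lemma pm_trans: "pm a b \<Longrightarrow> pm b c \<Longrightarrow> pm a c" unfolding pm_def by auto
lemma pm_foldl: "pm a b \<Longrightarrow> pm (foldl mult a zs) (foldl mult b zs)"
  unfolding pm_def using foldl_neg by auto
lemma pm_mem: "pm a b \<Longrightarrow> subspace S \<Longrightarrow> b \<in> S \<Longrightarrow> a \<in> S"
  unfolding pm_def using subspace_neg by auto

lemma insert_pm: "x \<in> H \<Longrightarrow> set as \<subseteq> H \<Longrightarrow> set bs \<subseteq> H \<Longrightarrow> b \<in> H \<Longrightarrow>
  pm (foldl mult x (as @ bs @ [b])) (foldl mult x (as @ b # bs))"
proof (induction bs rule: rev_induct)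
  case Nil then show ?case by (simp add: pm_def)
next
  case (snoc z bs)
  let ?w = "foldl mult x (as @ bs)"
  have w: "?w \<in> H" using snoc.prems by (intro foldlH) auto
  have 1: "pm (mult (mult ?w z) b) (mult (mult ?w b) z)"
    using RC[OF w] snoc.prems by auto
  have 2: "pm (foldl mult x (as @ bs @ [b])) (foldl mult x (as @ b # bs))"
    using snoc by auto
  have 3: "pm (mult (foldl mult x (as @ bs @ [b])) z) (mult (foldl mult x (as @ b # bs)) z)"
    using pm_foldl[OF 2, of "[z]"] by simp
  have h3: "pm (mult (mult ?w b) z) (mult (foldl mult x (as @ b # bs)) z)" using 3 by simp
  show ?case using pm_trans[OF 1 h3] by simp
qed

lemma perm_pm: "mset xs = mset ys \<Longrightarrow> x \<in> H \<Longrightarrow> set xs \<subseteq> H \<Longrightarrow>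
  pm (foldl mult x xs) (foldl mult x ys)"
proof (induction xs arbitrary: ys rule: rev_induct)
  case Nil
  then have "ys = []" by simp
  then show ?case by (simp add: pm_def)
next
  case (snoc b xs)
  have "b \<in># mset ys" using snoc.prems(1)[symmetric] by simp
  then have "b \<in> set ys" by simp
  then obtain as bs where ys: "ys = as @ b # bs" by (meson split_list)
  have m: "mset xs = mset (as @ bs)" using snoc.prems(1) ys by simp
  have sy: "set (as @ bs) \<subseteq> H" proof -
    have "set (as @ bs) = set xs" by (metis m set_mset_mset)
    then show ?thesis using snoc.prems by simp
  qed
  have 1: "pm (foldl mult x xs) (foldl mult x (as @ bs))" using snoc.IH[OF m] snoc.prems by simp
  have 2: "pm (foldl mult x (xs @ [b])) (foldl mult x (as @ bs @ [b]))"
    using pm_foldl[OF 1, of "[b]"] by simp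
  have 3: "pm (foldl mult x (as @ bs @ [b])) (foldl mult x (as @ b # bs))"
    using insert_pm[of x as bs b] snoc.prems sy by auto
  show ?case using pm_trans[OF 2 3] ys by simp
qed


lemma spanX1: "span X1 \<subseteq> A1" by (rule span_minimal[OF X1 sub1])

definition TG where "TG = {mult x c | x c. x \<in> A0 \<and> c \<in> A0} \<union>
   {mult (mult x g) y | x g y. x \<in> A0 \<and> g \<in> span X1 \<and> y \<in> A1}"
definition T where "T = span TG"

lemma T_sub: "subspace T" unfolding T_def by simp

lemma T_00: "x \<in> A0 \<Longrightarrow> c \<in> A0 \<Longrightarrow> mult x c \<in> T"
  unfolding T_def TG_def by (rule span_base) blast

lemma T_g: "x \<in> A0 \<Longrightarrow> g \<in> span X1 \<Longrightarrow> y \<in> A1 \<Longrightarrow> mult (mult x g) y \<in> T"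
  unfolding T_def TG_def by (rule span_base) blast

definition S1 where "S1 = {b \<in> A1. \<forall>x\<in>A0. \<forall>y\<in>A1. mult (mult x b) y \<in> T}"

lemma key_ident: assumes "x \<in> A0" "b \<in> A1" "y \<in> A1"
  shows "mult (mult x b) y = mult x (mult b y) - mult b (mult x y) + mult (mult b y) x"
proof -
  have e: "mult x (mult b y) - mult (mult x b) y = mult b (mult x y) - mult (mult b y) x"
    using LS011[OF assms] RC101[of b x y] assms by simp
  have "mult (mult x b) y = mult x (mult b y) - (mult x (mult b y) - mult (mult x b) y)" by simp
  also have "\<dots> = mult x (mult b y) - mult b (mult x y) + mult (mult b y) x"
    unfolding e by (simp add: algebra_simps)
  finally show ?thesis .
qed

lemma S1_crit: assumes "b \<in> A1" "\<And>w. w \<in> A1 \<Longrightarrow> mult b w \<in> T" shows "b \<in> S1"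
  unfolding S1_def
proof (intro CollectI conjI ballI)
  fix x y assume x: "x \<in> A0" and y: "y \<in> A1"
  have by0: "mult b y \<in> A0" using m11 assms(1) y by blast
  have "mult x (mult b y) - mult b (mult x y) + mult (mult b y) x \<in> T"
    using T_sub T_00[OF x by0] T_00[OF by0 x] assms(2)[OF m01[OF x y]]
    by (intro subspace_add subspace_diff) auto
  then show "mult (mult x b) y \<in> T" using key_ident[OF x assms(1) y] by simp
qed (rule assms(1))

lemma S1_10: "u \<in> A1 \<Longrightarrow> v \<in> A0 \<Longrightarrow> mult u v \<in> S1"
  by (rule S1_crit) (auto simp: RC101 intro: m10 T_00 m11)

lemma S1_01: "u \<in> A0 \<Longrightarrow> v \<in> S1 \<Longrightarrow> mult u v \<in> S1"
  by (rule S1_crit) (auto simp: S1_def intro: m01)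

lemma S1_sub: "subspace S1"
proof (rule subspaceI)
  show "0 \<in> S1" unfolding S1_def using subspace_0[OF sub1] subspace_0[OF T_sub]
    by (simp add: rmult0 mult0)
next
  fix b1 b2 assume "b1 \<in> S1" "b2 \<in> S1"
  then show "b1 + b2 \<in> S1" unfolding S1_def
    by (auto simp: radd ladd intro!: subspace_add[OF sub1] subspace_add[OF T_sub])
next
  fix c b assume "b \<in> S1"
  then show "scale c b \<in> S1" unfolding S1_def
    by (auto simp: rsc lsc intro!: subspace_scale[OF sub1] subspace_scale[OF T_sub])
qed

lemma X1_S1: "span X1 \<subseteq> S1"
proof (rule span_minimal[OF _ S1_sub])
  show "X1 \<subseteq> S1" unfolding S1_def using X1 span_base[of _ X1] by (auto intro: T_g)
qed

lemma A1_S1: assumes b: "b \<in> A1" shows "b \<in> S1"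
proof -
  define U where "U = {a + s | a s. a \<in> A0 \<and> s \<in> S1}"
  have S1A1: "S1 \<subseteq> A1" unfolding S1_def by auto
  have "X0 \<union> X1 \<subseteq> U"
  proof
    fix x assume "x \<in> X0 \<union> X1"
    then show "x \<in> U"
    proof
      assume "x \<in> X0" then show ?thesis unfolding U_def using X0 subspace_0[OF S1_sub]
        by (intro CollectI exI[of _ x] exI[of _ 0]) auto
    next
      assume "x \<in> X1" then show ?thesis unfolding U_def using X1_S1 span_base[of x X1]
          subspace_0[OF sub0]
        by (intro CollectI exI[of _ 0] exI[of _ x]) auto
    qed
  qed
  moreover have "subspace U"
  proof (rule subspaceI)
    show "0 \<in> U" unfolding U_def using subspace_0[OF sub0] subspace_0[OF S1_sub]
      by (intro CollectI exI[of _ 0] exI[of _ 0]) auto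
  next
    fix x y assume "x \<in> U" "y \<in> U"
    then obtain a s a' s' where "x = a + s" "y = a' + s'" "a \<in> A0" "s \<in> S1" "a' \<in> A0" "s' \<in> S1"
      unfolding U_def by blast
    then show "x + y \<in> U" unfolding U_def
      by (intro CollectI exI[of _ "a + a'"] exI[of _ "s + s'"])
        (auto simp: algebra_simps intro: subspace_add[OF sub0] subspace_add[OF S1_sub])
  next
    fix c x assume "x \<in> U"
    then obtain a s where "x = a + s" "a \<in> A0" "s \<in> S1"
      unfolding U_def by blast
    then show "scale c x \<in> U" unfolding U_def
      by (intro CollectI exI[of _ "scale c a"] exI[of _ "scale c s"])
        (auto simp: scale_right_distrib intro: subspace_scale[OF sub0] subspace_scale[OF S1_sub])
  qed
  moreover have "\<forall>x\<in>U. \<forall>y\<in>U. mult x y \<in> U"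
  proof (intro ballI)
    fix x y assume "x \<in> U" "y \<in> U"
    then obtain a s a' s' where xy: "x = a + s" "y = a' + s'" and h: "a \<in> A0" "s \<in> S1" "a' \<in> A0" "s' \<in> S1"
      unfolding U_def by blast
    have sA: "s \<in> A1" "s' \<in> A1" using h S1A1 by auto
    have "mult x y = (mult a a' + mult s s') + (mult a s' + mult s a')"
      unfolding xy by (simp add: ladd radd algebra_simps)
    moreover have "mult a a' + mult s s' \<in> A0"
      using h sA by (intro subspace_add[OF sub0] m00 m11) auto
    moreover have "mult a s' + mult s a' \<in> S1"
      using h sA by (intro subspace_add[OF S1_sub] S1_01 S1_10) auto
    ultimately show "mult x y \<in> U" unfolding U_def by blast
  qed
  ultimately have "generated_subalgebra scale mult (X0 \<union> X1) \<subseteq> U"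
    unfolding generated_subalgebra_def by blast
  then have "b \<in> U" using gen by auto
  then obtain a s where bs: "b = a + s" "a \<in> A0" "s \<in> S1" unfolding U_def by blast
  have "a = b - s" using bs by simp
  moreover have "b - s \<in> A1" using b bs S1A1 by (intro subspace_diff[OF sub1]) auto
  ultimately have "a = 0" using inter bs by auto
  then show ?thesis using bs by simp
qed

lemma K: "x \<in> A0 \<Longrightarrow> b \<in> A1 \<Longrightarrow> y \<in> A1 \<Longrightarrow> mult (mult x b) y \<in> T"
  using A1_S1[of b] unfolding S1_def by blast


definition TgtS :: "nat \<Rightarrow> 'a set" where
  "TgtS q = (\<Union>{lbracket scale mult (A0 # replicate t A0 @ replicate m (span X1) @ replicate p A1)
              | t m p :: nat. 2 * t + m + p = q \<and> p \<in> {1, 2}})"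

definition Tgt :: "nat \<Rightarrow> 'a set" where "Tgt q = span (TgtS q)"

lemma Tgt_sub: "subspace (Tgt q)" unfolding Tgt_def by simp

lemma la2_rep: "list_all2 P xs (replicate n a) \<longleftrightarrow> length xs = n \<and> (\<forall>x\<in>set xs. P x a)"
  by (auto simp: list_all2_conv_all_nth dest: in_set_conv_nth[THEN iffD1])

definition LG where "LG Vs = {lnorm mult xs | xs. list_all2 (\<lambda>x V. x \<in> V) xs Vs}"

lemma lb_gens: "lbracket scale mult Vs = span (LG Vs)"
  unfolding lbracket_def LG_def list_all2_conv_all_nth by (rule arg_cong[where f=span]) auto

lemma mem_lb: "list_all2 (\<lambda>x V. x \<in> V) xs Vs \<Longrightarrow> lnorm mult xs \<in> lbracket scale mult Vs"
  unfolding lb_gens LG_def by (rule span_base) blast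

lemma lnorm_Cons: "lnorm mult (x # xs) = foldl mult x xs" by (simp add: lnorm_def)

lemma mem_tgt:
  assumes "x \<in> A0" "set cs \<subseteq> A0" "set gs \<subseteq> span X1" "set bs \<subseteq> A1"
    "2 * length cs + length gs + length bs = q" "length bs \<in> {1,2}"
  shows "foldl mult x (cs @ gs @ bs) \<in> Tgt q"
proof -
  let ?Vs = "A0 # replicate (length cs) A0 @ replicate (length gs) (span X1) @ replicate (length bs) A1"
  have l1: "list_all2 (\<lambda>x V. x \<in> V) cs (replicate (length cs) A0)" unfolding la2_rep using assms by auto
  have l2: "list_all2 (\<lambda>x V. x \<in> V) gs (replicate (length gs) (span X1))" unfolding la2_rep using assms by auto
  have l3: "list_all2 (\<lambda>x V. x \<in> V) bs (replicate (length bs) A1)" unfolding la2_rep using assms by auto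
  have "list_all2 (\<lambda>x V. x \<in> V) (x # cs @ gs @ bs) ?Vs"
    using assms(1) l1 l2 l3 by (intro list_all2_Cons[THEN iffD2] conjI list_all2_appendI)
  then have "foldl mult x (cs @ gs @ bs) \<in> lbracket scale mult ?Vs"
    using mem_lb lnorm_Cons by metis
  then show ?thesis unfolding Tgt_def TgtS_def using assms(5,6)
    by (intro span_base) blast
qed

lemma lin_pre:
  assumes add: "\<And>u v. f (u + v) = f u + f v" and sc: "\<And>c u. f (scale c u) = scale c (f u)"
    and W: "subspace W" and S: "\<And>s. s \<in> S \<Longrightarrow> f s \<in> W" and v: "v \<in> span S"
  shows "f v \<in> W"
proof -
  have f0: "f 0 = 0" using add[of 0 0] by simp
  have "subspace {v. f v \<in> W}"
    by (rule subspaceI) (auto simp: f0 add sc intro: subspace_0[OF W] subspace_add[OF W] subspace_scale[OF W])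
  then have "span S \<subseteq> {v. f v \<in> W}" using S by (intro span_minimal) auto
  then show ?thesis using v by auto
qed

lemma A0H: "x \<in> A0 \<Longrightarrow> x \<in> H" and A1H: "x \<in> A1 \<Longrightarrow> x \<in> H" by (auto simp: H_def)

lemma step3:
  assumes y: "y \<in> A0" and cs: "set cs \<subseteq> A0" and gs: "set gs \<subseteq> span X1"
    and b: "b \<in> A1" and b': "b' \<in> A1" and c: "c \<in> A1"
    and q: "2 * length cs + length gs + 3 = q"
  shows "foldl mult y (cs @ gs @ [b, b', c]) \<in> Tgt q"
proof -
  let ?zs = "cs @ gs"
  have zsH: "set ?zs \<subseteq> H" using cs gs spanX1 by (auto simp: H_def)
  have "pm (foldl mult y (?zs @ [b, b', c])) (foldl mult y ([b, b', c] @ ?zs))"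
    by (rule perm_pm) (use zsH y b b' c in \<open>auto simp: H_def\<close>)
  moreover have "foldl mult y ([b, b', c] @ ?zs) \<in> Tgt q"
  proof -
    have eq: "foldl mult y ([b, b', c] @ ?zs) = foldl mult (mult (mult (mult y b) b') c) ?zs" by simp
    have "(\<lambda>w. foldl mult (mult w c) ?zs) (mult (mult y b) b') \<in> Tgt q"
    proof (rule lin_pre[OF _ _ Tgt_sub _ K[OF y b b', unfolded T_def]])
      fix u v show "foldl mult (mult (u + v) c) ?zs = foldl mult (mult u c) ?zs + foldl mult (mult v c) ?zs"
        by (simp add: ladd foldl_add)
    next
      fix d u show "foldl mult (mult (scale d u) c) ?zs = scale d (foldl mult (mult u c) ?zs)"
        by (simp add: lsc foldl_scale)
    next
      fix s assume "s \<in> TG"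
      then show "foldl mult (mult s c) ?zs \<in> Tgt q" unfolding TG_def
      proof
        assume "s \<in> {mult x c | x c. x \<in> A0 \<and> c \<in> A0}"
        then obtain x d where s: "s = mult x d" "x \<in> A0" "d \<in> A0" by blast
        have "pm (foldl mult x ([d, c] @ ?zs)) (foldl mult x ((d # cs) @ gs @ [c]))"
          by (rule perm_pm) (use zsH s c in \<open>auto simp: H_def\<close>)
        moreover have "foldl mult x ((d # cs) @ gs @ [c]) \<in> Tgt q"
          by (rule mem_tgt) (use s cs gs c q in auto)
        ultimately show ?thesis using s pm_mem[OF _ Tgt_sub] by simp
      next
        assume "s \<in> {mult (mult x g) y | x g y. x \<in> A0 \<and> g \<in> span X1 \<and> y \<in> A1}"
        then obtain x g e where s: "s = mult (mult x g) e" "x \<in> A0" "g \<in> span X1" "e \<in> A1" by blast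
        have gH: "g \<in> H" using s spanX1 by (auto simp: H_def)
        have "pm (foldl mult x ([g, e, c] @ ?zs)) (foldl mult x (cs @ (g # gs) @ [e, c]))"
          by (rule perm_pm) (use zsH s c gH in \<open>auto simp: H_def\<close>)
        moreover have "foldl mult x (cs @ (g # gs) @ [e, c]) \<in> Tgt q"
          by (rule mem_tgt) (use s cs gs c q in auto)
        ultimately show ?thesis using s pm_mem[OF _ Tgt_sub] by simp
      qed
    qed
    then show ?thesis using eq by simp
  qed
  ultimately show ?thesis using pm_mem[OF _ Tgt_sub] by (metis append_assoc)
qed

lemma main: "q \<ge> 1 \<Longrightarrow> x \<in> A0 \<Longrightarrow> length bs = q \<Longrightarrow> set bs \<subseteq> A1 \<Longrightarrow> foldl mult x bs \<in> Tgt q"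
proof (induction q arbitrary: x bs rule: less_induct)
  case (less q)
  show ?case
  proof (cases "q \<le> 2")
    case True
    then have "length bs \<in> {1,2}" using less.prems by auto
    then show ?thesis using mem_tgt[of x "[]" "[]" bs q] less.prems by auto
  next
    case False
    obtain bs' c where bs: "bs = bs' @ [c]" using less.prems(3) False
      by (metis le_numeral_extra(3) length_0_conv rev_exhaust zero_le)
    have c: "c \<in> A1" and bs': "set bs' \<subseteq> A1" "length bs' = q - 1" using less.prems bs by auto
    have ih: "foldl mult x bs' \<in> Tgt (q - 1)"
      using less.IH[of "q - 1" x bs'] False less.prems bs' by auto
    have "(\<lambda>v. mult v c) (foldl mult x bs') \<in> Tgt q"
    proof (rule lin_pre[OF _ _ Tgt_sub _ ih[unfolded Tgt_def]])
      fix s assume "s \<in> TgtS (q - 1)"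
      then obtain t m p where tmp: "2 * t + m + p = q - 1" "p \<in> {1,2}"
        and sl: "s \<in> lbracket scale mult (A0 # replicate t A0 @ replicate m (span X1) @ replicate p A1)"
        unfolding TgtS_def by blast
      show "mult s c \<in> Tgt q"
      proof (rule lin_pre[OF _ _ Tgt_sub _ sl[unfolded lb_gens]])
        fix u v show "mult (u + v) c = mult u c + mult v c" by (rule ladd)
      next
        fix d u show "mult (scale d u) c = scale d (mult u c)" by (rule lsc)
      next
        fix s assume "s \<in> LG (A0 # replicate t A0 @ replicate m (span X1) @ replicate p A1)"
        then obtain xs where s: "s = lnorm mult xs"
          and la: "list_all2 (\<lambda>x V. x \<in> V) xs (A0 # replicate t A0 @ replicate m (span X1) @ replicate p A1)"
          unfolding LG_def by blast
        from la obtain y rest where xs: "xs = y # rest" and y: "y \<in> A0"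
          and la': "list_all2 (\<lambda>x V. x \<in> V) rest (replicate t A0 @ replicate m (span X1) @ replicate p A1)"
          by (auto simp: list_all2_Cons2)
        from la' obtain cs r2 where r: "rest = cs @ r2" and cs: "length cs = t" "set cs \<subseteq> A0"
          and la2: "list_all2 (\<lambda>x V. x \<in> V) r2 (replicate m (span X1) @ replicate p A1)"
          unfolding list_all2_append2 by (auto simp: la2_rep)
        from la2 obtain gs bs0 where r2: "r2 = gs @ bs0" and gs: "length gs = m" "set gs \<subseteq> span X1"
          and bs0: "length bs0 = p" "set bs0 \<subseteq> A1"
          unfolding list_all2_append2 by (auto simp: la2_rep)
        have sc: "mult s c = foldl mult y (cs @ gs @ bs0 @ [c])"
          using s xs r r2 by (simp add: lnorm_Cons)
        show "mult s c \<in> Tgt q"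
        proof (cases "p = 1")
          case True
          then show ?thesis unfolding sc using mem_tgt[of y cs gs "bs0 @ [c]" q] y cs gs bs0 c tmp False
            by auto
        next
          case False
          then have "p = 2" using tmp by auto
          then obtain b b' where "bs0 = [b, b']" using bs0
            by (metis One_nat_def Suc_1 length_0_conv length_Suc_conv)
          then show ?thesis unfolding sc using step3[of y cs gs b b' c q] y cs gs bs0 c tmp \<open>p = 2\<close>
            \<open>\<not> q \<le> 2\<close> by auto
        qed
      qed
    qed (simp_all add: ladd lsc)
    then show ?thesis using bs by simp
  qed
qed

lemma final: "q \<ge> 1 \<Longrightarrow> lbracket scale mult (A0 # replicate q A1) \<subseteq> Tgt q"
  unfolding lb_gens LG_def
proof (rule span_minimal[OF _ Tgt_sub], safe)
  fix xs assume q: "q \<ge> 1" and la: "list_all2 (\<lambda>x V. x \<in> V) xs (A0 # replicate q A1)"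
  from la obtain y rest where xs: "xs = y # rest" and y: "y \<in> A0" and r: "length rest = q" "set rest \<subseteq> A1"
    by (auto simp: list_all2_Cons2 la2_rep)
  show "lnorm mult xs \<in> Tgt q" using main[OF q y r] xs by (simp add: lnorm_Cons)
qed

end

theorem lemma4p3:
  fixes scale :: "'k::field \<Rightarrow> 'a::ab_group_add \<Rightarrow> 'a"
    and mult :: "'a \<Rightarrow> 'a \<Rightarrow> 'a"
    and A0 A1 X0 X1 :: "'a set"
    and q :: nat
  assumes "gdn_superalgebra scale mult A0 A1"
    and "X0 \<subseteq> A0" and "X1 \<subseteq> A1"
    and "generated_subalgebra scale mult (X0 \<union> X1) = UNIV"
    and "q \<ge> 1"
  shows "lbracket scale mult (A0 # replicate q A1)
     \<subseteq> module.span scale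
          (\<Union>{lbracket scale mult (A0 # replicate t A0 @ replicate m (module.span scale X1) @ replicate p A1)
              | t m p :: nat. 2 * t + m + p = q \<and> p \<in> {1, 2}})"
proof -
  interpret gdn_ctx scale mult A0 A1 X0 X1 using assms(1-4) by unfold_locales
  show ?thesis using final[OF assms(5)] unfolding Tgt_def TgtS_def .
qed

end
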